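(* Let $N=[n]$, let $v:2^N\to\mathbb{R}_+$ be any monotone valuation with $v(\emptyset)=0$, let $c\in\mathbb{R}^n_+$ be a vector of service costs, and let $X$ be an up-consistent decision map for $v$. Then for every $\epsilon>0$ there exists an $\epsilon$-Nash equilibrium $p$ of the pricing game with costs defined by $v$, $c$ and $X$ such that $X(p)=X(c)$.
   Context: Pricing game with service costs: $N=[n]$ services, service $i$ controlled by seller $i$, who has cost $c_i\ge0$ for providing it. Buyer valuation $v:2^N\to\mathbb{R}_+$, monotone, $v(\emptyset)=0$. For $p\in\mathbb{R}^n_+$, $p(S)=\sum_{j\in S}p_j$, $D(v;p)=\arg\max_{S\subseteq N}(v(S)-p(S))$. A decision map is $X:\mathbb{R}^n_+\to2^N$ with $X(p)\in D(v;p)$ for all $p$. $X$ is up-consistent if for every $p$ with $X(p)=S$, every $i$ and every $p_i'>p_i$, either $X(p_i',p_{-i})=S$ or $i\notin X(p_i',p_{-i})$. Seller $i$'s utility is $u_i(p)=(p_i-c_i)\mathbf{1}\{i\in X(p)\}$. An $\epsilon$-Nash equilibrium is a $p\in\mathbb{R}^n_+$ with $u_i(p)\ge u_i(p_i',p_{-i})-\epsilon$ for all $i$ and $p_i'\in\mathbb{R}_+$. *)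

theory Defs
  imports "HOL-Analysis.Analysis"
begin

text \<open>Services are N = {..<n}. A price vector in R^n_+ is represented as a function
  nat => real that is nonnegative on N and zero outside N (canonical representative).\<close>

definition price_vecs :: "nat \<Rightarrow> (nat \<Rightarrow> real) set" where
  "price_vecs n = {p. (\<forall>i<n. 0 \<le> p i) \<and> (\<forall>i\<ge>n. p i = 0)}"

definition price_of :: "(nat \<Rightarrow> real) \<Rightarrow> nat set \<Rightarrow> real" where
  "price_of p S = (\<Sum>j\<in>S. p j)"

definition valuation :: "nat \<Rightarrow> (nat set \<Rightarrow> real) \<Rightarrow> bool" where
  "valuation n v \<longleftrightarrow> v {} = 0 \<and> (\<forall>S. S \<subseteq> {..<n} \<longrightarrow> 0 \<le> v S)
     \<and> (\<forall>S T. S \<subseteq> T \<and> T \<subseteq> {..<n} \<longrightarrow> v S \<le> v T)"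

definition demand :: "nat \<Rightarrow> (nat set \<Rightarrow> real) \<Rightarrow> (nat \<Rightarrow> real) \<Rightarrow> nat set set" where
  "demand n v p = {S. S \<subseteq> {..<n} \<and>
     (\<forall>T. T \<subseteq> {..<n} \<longrightarrow> v T - price_of p T \<le> v S - price_of p S)}"

definition decision_map :: "nat \<Rightarrow> (nat set \<Rightarrow> real) \<Rightarrow> ((nat \<Rightarrow> real) \<Rightarrow> nat set) \<Rightarrow> bool" where
  "decision_map n v X \<longleftrightarrow> (\<forall>p\<in>price_vecs n. X p \<in> demand n v p)"

definition up_consistent :: "nat \<Rightarrow> ((nat \<Rightarrow> real) \<Rightarrow> nat set) \<Rightarrow> bool" where
  "up_consistent n X \<longleftrightarrow> (\<forall>p\<in>price_vecs n. \<forall>i<n. \<forall>q. q > p i \<longrightarrow>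
     X (p(i := q)) = X p \<or> i \<notin> X (p(i := q)))"

definition seller_utility :: "(nat \<Rightarrow> real) \<Rightarrow> ((nat \<Rightarrow> real) \<Rightarrow> nat set) \<Rightarrow> nat \<Rightarrow> (nat \<Rightarrow> real) \<Rightarrow> real" where
  "seller_utility c X i p = (if i \<in> X p then p i - c i else 0)"

definition eps_nash :: "nat \<Rightarrow> (nat \<Rightarrow> real) \<Rightarrow> ((nat \<Rightarrow> real) \<Rightarrow> nat set) \<Rightarrow> real \<Rightarrow> (nat \<Rightarrow> real) \<Rightarrow> bool" where
  "eps_nash n c X \<epsilon> p \<longleftrightarrow> p \<in> price_vecs n \<and>
     (\<forall>i<n. \<forall>q\<ge>0. seller_utility c X i p \<ge> seller_utility c X i (p(i := q)) - \<epsilon>)"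

end

theory Submission
  imports Defs
begin

lemma price_upd:
  assumes "finite S" "i \<in> S"
  shows "price_of (p(i := q)) S = price_of p S - p i + q"
proof -
  have "price_of (p(i := q)) S = q + sum (p(i := q)) (S - {i})"
    unfolding price_of_def using assms by (simp add: sum.remove)
  also have "sum (p(i := q)) (S - {i}) = sum p (S - {i})" by (rule sum.cong) auto
  also have "sum p (S - {i}) = price_of p S - p i"
    unfolding price_of_def using assms by (simp add: sum.remove)
  finally show ?thesis by (simp only: fun_upd_def)
qed

theorem mainTheorem11:
  fixes n :: nat and v :: "nat set \<Rightarrow> real" and c :: "nat \<Rightarrow> real"
    and X :: "(nat \<Rightarrow> real) \<Rightarrow> nat set" and \<epsilon> :: real
  assumes "valuation n v"
    and "c \<in> price_vecs n"
    and "decision_map n v X"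
    and "up_consistent n X"
    and "\<epsilon> > 0"
  shows "\<exists>p. eps_nash n c X \<epsilon> p \<and> X p = X c"
proof -
  define S where "S = X c"
  have Sd: "S \<in> demand n v c" using assms(2,3) unfolding S_def decision_map_def by auto
  hence Ssub: "S \<subseteq> {..<n}" unfolding demand_def by auto
  hence finS: "finite S" using finite_subset by blast
  define A where "A = {p \<in> price_vecs n. (\<forall>i. i \<notin> S \<longrightarrow> p i = c i) \<and> (\<forall>i\<in>S. c i \<le> p i) \<and> X p = S}"
  have cA: "c \<in> A" unfolding A_def S_def using assms(2) by auto
  have bnd: "price_of p S \<le> v S" if "p \<in> A" for p
  proof -
    have "S \<in> demand n v p" using that assms(3) unfolding A_def decision_map_def by auto
    hence "v {} - price_of p {} \<le> v S - price_of p S" unfolding demand_def by auto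
    thus ?thesis using assms(1) unfolding valuation_def price_of_def by simp
  qed
  define M where "M = Sup ((\<lambda>p. price_of p S) ` A)"
  have bdd: "bdd_above ((\<lambda>p. price_of p S) ` A)" using bnd by (intro bdd_aboveI[of _ "v S"]) auto
  have ne: "(\<lambda>p. price_of p S) ` A \<noteq> {}" using cA by auto
  have leM: "price_of p S \<le> M" if "p \<in> A" for p
    unfolding M_def using bdd that by (auto intro: cSup_upper)
  obtain p where pA: "p \<in> A" and pM: "M - \<epsilon> < price_of p S"
  proof -
    have "M - \<epsilon> < M" using assms(5) by simp
    then obtain y where "y \<in> (\<lambda>p. price_of p S) ` A" "M - \<epsilon> < y"
      unfolding M_def using less_cSupE[OF _ ne] by (metis M_def)
    thus ?thesis using that by auto
  qed
  have pv: "p \<in> price_vecs n" and poff: "\<And>i. i \<notin> S \<Longrightarrow> p i = c i"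
    and pon: "\<And>i. i \<in> S \<Longrightarrow> c i \<le> p i" and pX: "X p = S"
    using pA unfolding A_def by auto
  have "eps_nash n c X \<epsilon> p"
    unfolding eps_nash_def
  proof (intro conjI pv allI impI)
    fix i q assume i: "i < n" and q: "0 \<le> (q::real)"
    have p'v: "p(i := q) \<in> price_vecs n" using pv i q unfolding price_vecs_def by auto
    have uc: "q > p i \<Longrightarrow> X (p(i := q)) = X p \<or> i \<notin> X (p(i := q))"
      using assms(4) pv i unfolding up_consistent_def by blast
    show "seller_utility c X i (p(i := q)) - \<epsilon> \<le> seller_utility c X i p"
    proof (cases "i \<in> S")
      case False
      hence u0: "seller_utility c X i p = 0" unfolding seller_utility_def pX by simp
      show ?thesis
      proof (cases "i \<in> X (p(i := q))")
        case True
        have "\<not> q > p i" using uc True False pX by auto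
        moreover have "q \<noteq> p i" using True False pX by auto
        ultimately have "q < c i" using poff[OF False] by auto
        thus ?thesis using True u0 assms(5) unfolding seller_utility_def by simp
      qed (use u0 assms(5) in \<open>simp add: seller_utility_def\<close>)
    next
      case True
      hence u: "seller_utility c X i p = p i - c i" unfolding seller_utility_def pX by simp
      show ?thesis
      proof (cases "i \<in> X (p(i := q))")
        case inX: True
        have "q \<le> p i + \<epsilon>"
        proof (rule ccontr)
          assume "\<not> q \<le> p i + \<epsilon>"
          hence qg: "q > p i + \<epsilon>" by simp
          hence "X (p(i := q)) = S" using uc inX pX assms(5) by auto
          moreover have "\<forall>j. j \<notin> S \<longrightarrow> (p(i := q)) j = c j" using poff True by auto
          moreover have "\<forall>j\<in>S. c j \<le> (p(i := q)) j" using pon qg True assms(5) by fastforce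
          ultimately have "p(i := q) \<in> A" using p'v unfolding A_def by auto
          hence "price_of (p(i := q)) S \<le> M" by (rule leM)
          thus False using price_upd[OF finS True, of p q] pM qg by simp
        qed
        thus ?thesis using inX u unfolding seller_utility_def by simp
      next
        case False
        thus ?thesis using u pon[OF True] assms(5) unfolding seller_utility_def by simp
      qed
    qed
  qed
  thus ?thesis using pX S_def by auto
qed

end
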